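(* Let $\mathcal P$ be any set of integer vectors in $\mathbb Z^d$. Then one of the following holds: (i) there is a non-zero $v\in\mathbb R^d$ with $v\cdot p\ge0$ for all $p\in\mathcal P$; (ii) there is a strict sublattice of $\mathbb Z^d$ containing every vector of $\mathcal P$; (iii) there is a finite subset $\mathcal Q=\{q_1,\dots,q_k\}\subseteq\mathcal P$ that is spanning. Moreover, in case (iii), for any norm $\|\cdot\|_M$ on $\mathbb R^d$ there are constants $\mu,\nu$ such that every $z\in\mathbb Z^d$ can be written as $z=q_1+\dots+q_n$ with each $q_i\in\mathcal Q$, $n\le\mu\|z\|_M$ and $\sum_{i=1}^n\|q_i\|_M\le\nu\|z\|_M$.
   Context: A set of vectors in $\mathbb Z^d$ is spanning if every vector of $\mathbb Z^d$ can be written as a finite sum of (possibly repeated) vectors from the set. *)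

theory Defs
  imports "HOL-Analysis.Analysis"
begin

text \<open>Integer vectors of Z^d are modelled as int ^ 'd; the dimension d = CARD('d).\<close>

definition to_real_vec :: "int ^ 'd \<Rightarrow> real ^ 'd" where
  "to_real_vec z = (\<chi> i. real_of_int (z $ i))"

definition spanning :: "(int ^ 'd) set \<Rightarrow> bool" where
  "spanning S \<longleftrightarrow> (\<forall>z. \<exists>qs. set qs \<subseteq> S \<and> sum_list qs = z)"

definition sublattice :: "(int ^ 'd) set \<Rightarrow> bool" where
  "sublattice L \<longleftrightarrow> 0 \<in> L \<and> (\<forall>x\<in>L. \<forall>y\<in>L. x + y \<in> L) \<and> (\<forall>x\<in>L. - x \<in> L)"

definition is_norm :: "(real ^ 'd \<Rightarrow> real) \<Rightarrow> bool" where
  "is_norm N \<longleftrightarrow> (\<forall>x. N x = 0 \<longleftrightarrow> x = 0) \<and> (\<forall>c x. N (c *\<^sub>R x) = \<bar>c\<bar> * N x)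
                 \<and> (\<forall>x y. N (x + y) \<le> N x + N y)"

end

theory Submission
  imports Defs "HOL-Library.FuncSet"
begin


lemma trv_add: "to_real_vec (x + y) = to_real_vec x + to_real_vec y"
  by (simp add: to_real_vec_def vec_eq_iff)
lemma trv_minus: "to_real_vec (- x) = - to_real_vec x"
  by (simp add: to_real_vec_def vec_eq_iff)
lemma trv_0[simp]: "to_real_vec 0 = 0"
  by (simp add: to_real_vec_def vec_eq_iff)
lemma trv_nth: "to_real_vec x $ i = real_of_int (x $ i)"
  by (simp add: to_real_vec_def)

lemma finite_bounded_int:
  "finite {z::int^'d. norm (to_real_vec z) \<le> B}"
proof -
  define K where "K = \<lceil>B\<rceil>"
  have "{z::int^'d. norm (to_real_vec z) \<le> B} \<subseteq> vec_lambda ` (PiE UNIV (\<lambda>_. {-K..K}))"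
  proof
    fix z :: "int^'d" assume "z \<in> {z. norm (to_real_vec z) \<le> B}"
    hence n: "norm (to_real_vec z) \<le> B" by simp
    have "\<bar>z $ i\<bar> \<le> K" for i
    proof -
      have "\<bar>real_of_int (z $ i)\<bar> \<le> B"
        using component_le_norm_cart[of "to_real_vec z" i] n by (simp add: trv_nth)
      thus ?thesis unfolding K_def by linarith
    qed
    hence "(\<lambda>i. z $ i) \<in> PiE UNIV (\<lambda>_. {-K..K})" by (auto simp: abs_le_iff, smt (verit))
    thus "z \<in> vec_lambda ` (PiE UNIV (\<lambda>_. {-K..K}))"
      by (metis image_eqI vec_nth_inverse)
  qed
  moreover have "finite (vec_lambda ` (PiE UNIV (\<lambda>_. {-K..K})) :: (int^'d) set)"
    by (intro finite_imageI finite_PiE) auto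
  ultimately show ?thesis by (rule finite_subset)
qed

lemma sum_list_rep:
  assumes "\<forall>x\<in>S. \<exists>qs. set qs \<subseteq> Q \<and> sum_list qs = x"
  shows "set xs \<subseteq> S \<Longrightarrow> \<exists>qs. set qs \<subseteq> Q \<and> sum_list qs = (sum_list xs :: 'a::monoid_add)"
proof (induction xs)
  case Nil
  then show ?case by (intro exI[of _ "[]"]) auto
next
  case (Cons a xs)
  then obtain qs where qs: "set qs \<subseteq> Q" "sum_list qs = sum_list xs" by auto
  from Cons.prems assms obtain ps where ps: "set ps \<subseteq> Q" "sum_list ps = a" by auto
  show ?case using qs ps by (intro exI[of _ "ps @ qs"]) auto
qed



lemma walk:
  fixes Q1 :: "(int^'d) set" and q :: "int^'d"
  assumes fin: "finite Q1" and dpos: "\<delta> > 0"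
    and cov: "\<forall>v\<in>sphere (0::real^'d) 1. \<exists>p\<in>Q1. v \<bullet> to_real_vec p \<le> -\<delta>"
  shows "\<exists>xs. set xs \<subseteq> insert q Q1 \<and> sum_list xs = -q"
proof -
  define nr where "nr z = norm (to_real_vec (z::int^'d))" for z
  define R where "R = (\<Sum>p\<in>insert q Q1. nr p)"
  have Rge: "nr p \<le> R" if "p \<in> insert q Q1" for p
    unfolding R_def using fin that by (intro member_le_sum) (auto simp: nr_def)
  have R0: "R \<ge> 0" using Rge[of q] by (simp add: nr_def) (smt (verit) norm_ge_zero)
  define T where "T = R^2/\<delta>"
  have T0: "T \<ge> 0" unfolding T_def using dpos by simp
  have greedy: "\<exists>p\<in>Q1. nr (w + p) < nr w" if w: "nr w > T" for w
  proof -
    define a where "a = to_real_vec w"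
    have an: "norm a > T" using w by (simp add: a_def nr_def)
    hence a0: "a \<noteq> 0" using T0 by auto
    have "a /\<^sub>R norm a \<in> sphere 0 1" using a0 by simp
    then obtain p where p: "p \<in> Q1" "(a /\<^sub>R norm a) \<bullet> to_real_vec p \<le> -\<delta>" using cov by blast
    define b where "b = to_real_vec p"
    have "(a /\<^sub>R norm a) \<bullet> b = (a \<bullet> b) / norm a" by (simp add: divide_inverse_commute)
    hence ab: "a \<bullet> b \<le> -\<delta> * norm a" using p(2) a0 unfolding b_def[symmetric]
      by (simp add: divide_le_eq)
    have bR: "norm b \<le> R" using Rge[of p] p(1) by (simp add: b_def nr_def)
    have "\<delta> * T = R^2" unfolding T_def using dpos by simp
    hence dT: "\<delta> * norm a > R^2" using an dpos by (metis mult_strict_left_mono)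
    have "(norm (a + b))^2 = (norm a)^2 + 2 * (a \<bullet> b) + (norm b)^2"
      by (simp add: power2_norm_eq_inner algebra_simps inner_commute)
    also have "\<dots> < (norm a)^2"
    proof -
      have "(norm b)^2 \<le> R^2" using bR by (simp add: power_mono)
      moreover have "a \<bullet> b \<le> - (\<delta> * norm a)" using ab by simp
      ultimately show ?thesis using dT zero_le_power2[of R] by linarith
    qed
    finally have "norm (a + b) < norm a"
      by (meson norm_ge_zero power_less_imp_less_base)
    thus ?thesis using p(1) by (auto simp: nr_def a_def b_def trv_add)
  qed
  obtain g where g: "\<And>w. nr w > T \<Longrightarrow> g w \<in> Q1 \<and> nr (w + g w) < nr w"
    using greedy by metis
  define st where "st w = (if nr w \<le> T then q else g w)" for w
  define W where "W n = ((\<lambda>w. w + st w) ^^ n) 0" for n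
  have WS: "W (Suc n) = W n + st (W n)" for n by (simp add: W_def)
  have W0: "W 0 = 0" by (simp add: W_def)
  have st_in: "st w \<in> insert q Q1" for w using g[of w] by (auto simp: st_def)
  have bound: "nr (W n) \<le> T + R" for n
  proof (induction n)
    case 0 then show ?case using T0 R0 by (simp add: W0 nr_def)
  next
    case (Suc n)
    show ?case
    proof (cases "nr (W n) \<le> T")
      case True
      have "nr (W (Suc n)) \<le> nr (W n) + nr q"
        using True by (simp add: WS st_def nr_def trv_add norm_triangle_ineq)
      thus ?thesis using True Rge[of q] by simp
    next
      case False
      thus ?thesis using g[of "W n"] Suc by (simp add: WS st_def)
    qed
  qed
  have "\<not> inj W"
  proof
    assume "inj W"
    have "range W \<subseteq> {z. norm (to_real_vec z) \<le> T + R}" using bound by (auto simp: nr_def)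
    hence "finite (range W)" using finite_bounded_int finite_subset by blast
    hence "finite (UNIV :: nat set)" using \<open>inj W\<close> finite_imageD by blast
    thus False by simp
  qed
  then obtain a b where ab: "a < b" "W a = W b"
    unfolding inj_def by (metis linorder_neqE_nat)
  define xs where "xs = map (\<lambda>n. st (W n)) [a..<b]"
  have Wk: "W (a + k) = W a + sum_list (map (\<lambda>n. st (W n)) [a..<a+k])" for k
    by (induction k) (auto simp: WS add.assoc)
  have "W b = W a + sum_list xs" using Wk[of "b - a"] ab(1) by (simp add: xs_def)
  hence s0: "sum_list xs = 0" using ab(2) by simp
  have sxs: "set xs \<subseteq> insert q Q1" using st_in by (auto simp: xs_def)
  have "\<exists>n\<in>{a..<b}. nr (W n) \<le> T"
  proof (rule ccontr)
    assume "\<not> ?thesis"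
    hence big: "\<And>n. a \<le> n \<Longrightarrow> n < b \<Longrightarrow> nr (W n) > T" by (meson atLeastLessThan_iff not_le)
    have "a + Suc k \<le> b \<Longrightarrow> nr (W (a + Suc k)) < nr (W a)" for k
    proof (induction k)
      case 0
      then show ?case using big[of a] g[of "W a"] by (simp add: WS st_def)
    next
      case (Suc k)
      have "nr (W (a + Suc (Suc k))) < nr (W (a + Suc k))"
        using big[of "a + Suc k"] g[of "W (a + Suc k)"] Suc.prems
        by (simp add: WS st_def)
      thus ?case using Suc by simp
    qed
    from this[of "b - a - 1"] ab show False by simp
  qed
  then obtain n where n: "n \<in> {a..<b}" "nr (W n) \<le> T" by blast
  hence qin: "q \<in> set xs" by (force simp: xs_def st_def)
  have "sum_list xs = q + sum_list (remove1 q xs)"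
    using sum_list_map_remove1[OF qin, of id] by simp
  hence "sum_list (remove1 q xs) = -q" using s0 by (simp add: add_eq_0_iff)
  moreover have "set (remove1 q xs) \<subseteq> insert q Q1" using sxs set_remove1_subset by fastforce
  ultimately show ?thesis by blast
qed



lemma span_bound:
  fixes Q :: "(int^'d) set"
  assumes pos: "\<And>i. \<exists>qs. set qs \<subseteq> Q \<and> sum_list qs = axis i 1"
      and neg: "\<And>i. \<exists>qs. set qs \<subseteq> Q \<and> sum_list qs = - axis i 1"
  shows "\<exists>L::nat. \<forall>z. \<exists>qs. set qs \<subseteq> Q \<and> sum_list qs = z \<and> length qs \<le> L * (\<Sum>i\<in>UNIV. nat \<bar>z$i\<bar>)"
proof -
  obtain f where f: "\<And>i. set (f i) \<subseteq> Q \<and> sum_list (f i) = axis i 1" using pos by metis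
  obtain g where g: "\<And>i. set (g i) \<subseteq> Q \<and> sum_list (g i) = - axis i 1" using neg by metis
  define L where "L = (\<Sum>i\<in>UNIV. length (f i) + length (g i))"
  have Lf: "length (f i) \<le> L" and Lg: "length (g i) \<le> L" for i
  proof -
    have "length (f i) + length (g i) \<le> L" unfolding L_def
      by (rule member_le_sum) auto
    thus "length (f i) \<le> L" "length (g i) \<le> L" by auto
  qed
  have natp: "\<exists>qs. set qs \<subseteq> Q \<and> sum_list qs = int n *s axis i 1 \<and> length qs \<le> L * n" for n i
  proof (induction n)
    case 0 then show ?case by (intro exI[of _ "[]"]) (simp add: vec_eq_iff)
  next
    case (Suc n)
    then obtain qs where qs: "set qs \<subseteq> Q" "sum_list qs = int n *s axis i 1" "length qs \<le> L * n" by blast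
    have "int (Suc n) *s axis i (1::int) = int n *s axis i 1 + axis i 1"
      by (simp add: vec_eq_iff algebra_simps)
    thus ?case using qs f[of i] Lf[of i] by (intro exI[of _ "qs @ f i"]) auto
  qed
  have natn: "\<exists>qs. set qs \<subseteq> Q \<and> sum_list qs = - (int n *s axis i 1) \<and> length qs \<le> L * n" for n i
  proof (induction n)
    case 0 then show ?case by (intro exI[of _ "[]"]) (simp add: vec_eq_iff)
  next
    case (Suc n)
    then obtain qs where qs: "set qs \<subseteq> Q" "sum_list qs = - (int n *s axis i 1)" "length qs \<le> L * n" by blast
    have "- (int (Suc n) *s axis i (1::int)) = - (int n *s axis i 1) + - axis i 1"
      by (simp add: vec_eq_iff algebra_simps)
    thus ?case using qs g[of i] Lg[of i] by (intro exI[of _ "qs @ g i"]) auto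
  qed
  have intk: "\<exists>qs. set qs \<subseteq> Q \<and> sum_list qs = k *s axis i 1 \<and> length qs \<le> L * nat \<bar>k\<bar>" for k i
  proof (cases "k \<ge> 0")
    case True
    then show ?thesis using natp[of "nat k" i] by simp
  next
    case False
    have "k *s axis i (1::int) = - (int (nat (-k)) *s axis i 1)" using False
      by (simp add: vec_eq_iff)
    then show ?thesis using natn[of "nat (-k)" i] False by simp
  qed
  have fs: "\<exists>qs. set qs \<subseteq> Q \<and> sum_list qs = (\<Sum>i\<in>S. z$i *s axis i 1) \<and> length qs \<le> L * (\<Sum>i\<in>S. nat \<bar>z$i\<bar>)"
    if "finite S" for S and z :: "int^'d"
    using that
  proof (induction S rule: finite_induct)
    case empty then show ?case by (intro exI[of _ "[]"]) simp
  next
    case (insert x F)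
    then obtain qs where qs: "set qs \<subseteq> Q" "sum_list qs = (\<Sum>i\<in>F. z$i *s axis i 1)"
      "length qs \<le> L * (\<Sum>i\<in>F. nat \<bar>z$i\<bar>)" by blast
    obtain ps where ps: "set ps \<subseteq> Q" "sum_list ps = z$x *s axis x 1" "length ps \<le> L * nat \<bar>z$x\<bar>"
      using intk by blast
    show ?case using qs ps insert(1,2)
      by (intro exI[of _ "ps @ qs"]) (auto simp: algebra_simps)
  qed
  show ?thesis
  proof (intro exI[of _ L] allI)
    fix z :: "int^'d"
    show "\<exists>qs. set qs \<subseteq> Q \<and> sum_list qs = z \<and> length qs \<le> L * (\<Sum>i\<in>UNIV. nat \<bar>z$i\<bar>)"
      using fs[of UNIV z] by (simp add: basis_expansion)
  qed
qed

lemma norm_props: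
  assumes N: "is_norm N"
  shows "N 0 = 0" "N (-x) = N x" "N x \<ge> 0"
proof -
  show N0: "N 0 = 0" using N by (simp add: is_norm_def)
  have "N ((-1) *\<^sub>R x) = \<bar>-1\<bar> * N x" using N unfolding is_norm_def by blast
  thus Nm: "N (-x) = N x" by simp
  have "N (x + -x) \<le> N x + N (-x)" using N unfolding is_norm_def by blast
  thus "N x \<ge> 0" using N0 Nm by simp
qed

lemma norm_lower:
  fixes N :: "real^'d \<Rightarrow> real"
  assumes N: "is_norm N"
  shows "\<exists>m>0. \<forall>x. m * norm x \<le> N x"
proof -
  have cvx: "convex_on UNIV N"
  proof (rule convex_onI)
    fix t x y :: "_" assume t: "(0::real) < t" "t < 1"
    have "N ((1 - t) *\<^sub>R x + t *\<^sub>R y) \<le> N ((1 - t) *\<^sub>R x) + N (t *\<^sub>R y)"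
      using N unfolding is_norm_def by blast
    also have "\<dots> = (1 - t) * N x + t * N y" using N t by (simp add: is_norm_def)
    finally show "N ((1 - t) *\<^sub>R x + t *\<^sub>R y) \<le> (1 - t) * N x + t * N y" .
  qed simp
  have "continuous_on UNIV N" by (rule convex_on_continuous[OF open_UNIV cvx])
  hence cs: "continuous_on (sphere (0::real^'d) 1) N" using continuous_on_subset by blast
  obtain x0 where x0: "x0 \<in> sphere (0::real^'d) 1" "\<forall>y\<in>sphere 0 1. N x0 \<le> N y"
    using continuous_attains_inf[OF compact_sphere _ cs] by auto
  have "x0 \<noteq> 0" using x0(1) by auto
  hence "N x0 \<noteq> 0" using N by (simp add: is_norm_def)
  hence m0: "N x0 > 0" using norm_props(3)[OF N, of x0] by simp
  show ?thesis
  proof (intro exI conjI allI)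
    show "N x0 > 0" by fact
    fix x :: "real^'d"
    show "N x0 * norm x \<le> N x"
    proof (cases "x = 0")
      case True then show ?thesis using norm_props(1)[OF N] by simp
    next
      case False
      have "x /\<^sub>R norm x \<in> sphere 0 1" using False by simp
      hence "N x0 \<le> N (x /\<^sub>R norm x)" using x0(2) by blast
      also have "N (x /\<^sub>R norm x) = N x / norm x" using N by (simp add: is_norm_def divide_inverse_commute)
      finally show ?thesis using False by (simp add: field_simps)
    qed
  qed
qed



lemma sum_list_le_len:
  assumes "\<And>q. q \<in> set qs \<Longrightarrow> f q \<le> (M::real)"
  shows "(\<Sum>q\<leftarrow>qs. f q) \<le> real (length qs) * M"
  using assms
proof (induction qs)
  case (Cons a qs)
  have "f a \<le> M" using Cons.prems by simp
  moreover have "(\<Sum>q\<leftarrow>qs. f q) \<le> real (length qs) * M" using Cons by simp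
  ultimately show ?case by (simp add: algebra_simps)
qed simp

lemma part2:
  fixes Q :: "(int^'d) set"
  assumes fin: "finite Q" and sp: "spanning Q" and N: "is_norm N"
  shows "\<exists>\<mu> \<nu> :: real. \<forall>z. \<exists>qs. set qs \<subseteq> Q \<and> sum_list qs = z
                 \<and> real (length qs) \<le> \<mu> * N (to_real_vec z)
                 \<and> (\<Sum>q\<leftarrow>qs. N (to_real_vec q)) \<le> \<nu> * N (to_real_vec z)"
proof -
  obtain L :: nat where L: "\<forall>z. \<exists>qs. set qs \<subseteq> Q \<and> sum_list qs = z \<and> length qs \<le> L * (\<Sum>i\<in>UNIV. nat \<bar>z$i\<bar>)"
    using span_bound[of Q] sp unfolding spanning_def by blast
  obtain m where m: "m > 0" "\<forall>x. m * norm x \<le> N x" using norm_lower[OF N] by blast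
  define C where "C = real CARD('d)"
  define Mx where "Mx = (\<Sum>q\<in>Q. N (to_real_vec q))"
  have Mx: "N (to_real_vec q) \<le> Mx" if "q \<in> Q" for q
    unfolding Mx_def using fin that norm_props(3)[OF N] by (intro member_le_sum) auto
  have Mx0: "Mx \<ge> 0" unfolding Mx_def using norm_props(3)[OF N] by (simp add: sum_nonneg)
  define \<mu> where "\<mu> = real L * C / m"
  have \<mu>0: "\<mu> \<ge> 0" unfolding \<mu>_def C_def using m by simp
  have "\<exists>qs. set qs \<subseteq> Q \<and> sum_list qs = z \<and> real (length qs) \<le> \<mu> * N (to_real_vec z)
           \<and> (\<Sum>q\<leftarrow>qs. N (to_real_vec q)) \<le> \<mu> * Mx * N (to_real_vec z)" for z
  proof -
    obtain qs where qs: "set qs \<subseteq> Q" "sum_list qs = z" "length qs \<le> L * (\<Sum>i\<in>UNIV. nat \<bar>z$i\<bar>)"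
      using L by blast
    have "real (\<Sum>i\<in>UNIV. nat \<bar>z$i\<bar>) = (\<Sum>i\<in>UNIV. \<bar>to_real_vec z $ i\<bar>)"
      by (simp add: trv_nth of_nat_sum)
    also have "\<dots> \<le> (\<Sum>i\<in>(UNIV::'d set). norm (to_real_vec z))"
      by (intro sum_mono component_le_norm_cart)
    also have "\<dots> = C * norm (to_real_vec z)" by (simp add: C_def)
    finally have s1: "real (\<Sum>i\<in>UNIV. nat \<bar>z$i\<bar>) \<le> C * norm (to_real_vec z)" .
    have "norm (to_real_vec z) \<le> N (to_real_vec z) / m" using m by (simp add: field_simps)
    hence "C * norm (to_real_vec z) \<le> C * (N (to_real_vec z) / m)"
      by (intro mult_left_mono) (auto simp: C_def)
    with s1 have s2: "real (\<Sum>i\<in>UNIV. nat \<bar>z$i\<bar>) \<le> C * (N (to_real_vec z) / m)" by linarith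
    have "real (length qs) \<le> real L * real (\<Sum>i\<in>UNIV. nat \<bar>z$i\<bar>)"
      using qs(3) by (metis of_nat_le_iff of_nat_mult)
    also have "\<dots> \<le> real L * (C * (N (to_real_vec z) / m))"
      by (intro mult_left_mono s2) simp
    also have "\<dots> = \<mu> * N (to_real_vec z)" by (simp add: \<mu>_def)
    finally have len: "real (length qs) \<le> \<mu> * N (to_real_vec z)" .
    have "(\<Sum>q\<leftarrow>qs. N (to_real_vec q)) \<le> real (length qs) * Mx"
      using qs(1) Mx by (intro sum_list_le_len) auto
    also have "\<dots> \<le> \<mu> * N (to_real_vec z) * Mx" by (intro mult_right_mono len Mx0)
    finally have "(\<Sum>q\<leftarrow>qs. N (to_real_vec q)) \<le> \<mu> * Mx * N (to_real_vec z)" by (simp add: algebra_simps)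
    then show "\<exists>qs. set qs \<subseteq> Q \<and> sum_list qs = z \<and> real (length qs) \<le> \<mu> * N (to_real_vec z)
           \<and> (\<Sum>q\<leftarrow>qs. N (to_real_vec q)) \<le> \<mu> * Mx * N (to_real_vec z)"
      using qs len \<open>(\<Sum>q\<leftarrow>qs. N (to_real_vec q)) \<le> \<mu> * Mx * N (to_real_vec z)\<close> by blast
  qed
  thus ?thesis by blast
qed



lemma part1:
  fixes P :: "(int^'d) set"
  assumes ni: "\<not>(\<exists>v::real^'d. v \<noteq> 0 \<and> (\<forall>p\<in>P. v \<bullet> to_real_vec p \<ge> 0))"
      and nii: "\<not>(\<exists>L. sublattice L \<and> L \<noteq> UNIV \<and> P \<subseteq> L)"
  shows "\<exists>Q. finite Q \<and> Q \<subseteq> P \<and> spanning Q"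
proof -
  define G where "G = {sum_list xs | xs. set xs \<subseteq> P \<union> uminus ` P}"
  have negl: "sum_list (map uminus xs) = - sum_list xs" for xs :: "(int^'d) list"
    by (induction xs) auto
  have "sublattice G"
    unfolding sublattice_def
  proof (intro conjI ballI)
    show "0 \<in> G" unfolding G_def by (auto intro!: exI[of _ "[]"])
  next
    fix x y assume "x \<in> G" "y \<in> G"
    then obtain xs ys where "set xs \<subseteq> P \<union> uminus ` P" "x = sum_list xs"
      "set ys \<subseteq> P \<union> uminus ` P" "y = sum_list ys" unfolding G_def by blast
    thus "x + y \<in> G" unfolding G_def by (auto intro!: exI[of _ "xs @ ys"])
  next
    fix x assume "x \<in> G"
    then obtain xs where xs: "set xs \<subseteq> P \<union> uminus ` P" "x = sum_list xs" unfolding G_def by blast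
    have "set (map uminus xs) \<subseteq> P \<union> uminus ` P"
    proof
      fix y assume "y \<in> set (map uminus xs)"
      then obtain u where u: "u \<in> set xs" "y = - u" by auto
      show "y \<in> P \<union> uminus ` P" using xs(1) u by auto
    qed
    thus "- x \<in> G" unfolding G_def using xs(2) negl[of xs] by (intro CollectI exI[of _ "map uminus xs"]) simp
  qed
  moreover have "P \<subseteq> G" unfolding G_def by (auto intro!: exI[where x="[_]"])
  ultimately have GU: "G = UNIV" using nii by blast
  have inG: "\<exists>xs. set xs \<subseteq> P \<union> uminus ` P \<and> sum_list xs = y" for y
  proof -
    have "y \<in> G" using GU by simp
    thus ?thesis unfolding G_def by blast
  qed
  have "\<forall>i::'d. \<exists>xs. set xs \<subseteq> P \<union> uminus ` P \<and> sum_list xs = axis i (1::int)"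
    using inG by blast
  then obtain xf where xf: "\<And>i. set (xf i) \<subseteq> P \<union> uminus ` P \<and> sum_list (xf i) = axis (i::'d) (1::int)"
    by (auto dest!: choice)
  have "\<forall>i::'d. \<exists>xs. set xs \<subseteq> P \<union> uminus ` P \<and> sum_list xs = - axis i (1::int)"
    using inG by blast
  then obtain xg where xg: "\<And>i. set (xg i) \<subseteq> P \<union> uminus ` P \<and> sum_list (xg i) = - axis (i::'d) (1::int)"
    by (auto dest!: choice)
  define A where "A = (\<Union>i. set (xf i) \<union> set (xg i))"
  have finA: "finite A" unfolding A_def by auto
  define Q0 where "Q0 = P \<inter> (A \<union> uminus ` A)"
  have finQ0: "finite Q0" unfolding Q0_def using finA by auto
  have AQ0: "A \<subseteq> Q0 \<union> uminus ` Q0"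
  proof
    fix x assume xA: "x \<in> A"
    hence "x \<in> P \<union> uminus ` P" unfolding A_def using xf xg by blast
    thus "x \<in> Q0 \<union> uminus ` Q0"
    proof
      assume "x \<in> P" thus ?thesis using xA by (auto simp: Q0_def)
    next
      assume "x \<in> uminus ` P"
      then obtain p where p: "p \<in> P" "x = - p" by auto
      hence "p \<in> Q0" using xA unfolding Q0_def by (metis IntI UnI2 image_eqI minus_minus)
      thus ?thesis using p by auto
    qed
  qed
  define U where "U = (\<lambda>(p, n::nat). {v::real^'d. v \<bullet> to_real_vec p < - (1 / real (Suc n))})"
  have opn: "open (U c)" for c
  proof -
    obtain p n where c: "c = (p, n)" by fastforce
    have "U c = {v. to_real_vec p \<bullet> v < - (1 / real (Suc n))}" by (simp add: U_def c inner_commute)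
    thus ?thesis by (simp add: open_halfspace_lt)
  qed
  have cover: "sphere (0::real^'d) 1 \<subseteq> (\<Union>c\<in>P \<times> UNIV. U c)"
  proof
    fix v :: "real^'d" assume "v \<in> sphere 0 1"
    hence "v \<noteq> 0" by auto
    then obtain p where p: "p \<in> P" "v \<bullet> to_real_vec p < 0" using ni by force
    then obtain n where n: "inverse (real (Suc n)) < - (v \<bullet> to_real_vec p)"
      using reals_Archimedean[of "- (v \<bullet> to_real_vec p)"] by auto
    hence "v \<in> U (p, n)" by (simp add: U_def inverse_eq_divide)
    thus "v \<in> (\<Union>c\<in>P \<times> UNIV. U c)" using p(1) by blast
  qed
  obtain F where F: "F \<subseteq> P \<times> UNIV" "finite F" "sphere (0::real^'d) 1 \<subseteq> (\<Union>c\<in>F. U c)"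
    using compactE_image[OF compact_sphere opn cover] by blast
  define Q1 where "Q1 = fst ` F"
  define \<delta> where "\<delta> = 1 / real (Suc (\<Sum>c\<in>F. snd c))"
  have \<delta>0: "\<delta> > 0" unfolding \<delta>_def using of_nat_0_less_iff zero_less_Suc by (metis divide_pos_pos zero_less_one)
  have cov: "\<forall>v\<in>sphere (0::real^'d) 1. \<exists>p\<in>Q1. v \<bullet> to_real_vec p \<le> -\<delta>"
  proof
    fix v :: "real^'d" assume "v \<in> sphere 0 1"
    then obtain p n where pn: "(p, n) \<in> F" "v \<in> U (p, n)" using F(3) by auto
    have "n \<le> (\<Sum>c\<in>F. snd c)" using member_le_sum[OF pn(1), of snd] F(2) by simp
    hence "\<delta> \<le> 1 / real (Suc n)" unfolding \<delta>_def by (intro divide_left_mono) (simp_all del: of_nat_Suc)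
    moreover have "v \<bullet> to_real_vec p < - (1 / real (Suc n))" using pn(2) by (simp add: U_def)
    ultimately have "v \<bullet> to_real_vec p \<le> -\<delta>" by linarith
    moreover have "p \<in> Q1" using pn(1) by (force simp: Q1_def)
    ultimately show "\<exists>p\<in>Q1. v \<bullet> to_real_vec p \<le> -\<delta>" by blast
  qed
  have finQ1: "finite Q1" using F(2) by (simp add: Q1_def)
  have Q1P: "Q1 \<subseteq> P" using F(1) by (auto simp: Q1_def)
  define Q where "Q = Q0 \<union> Q1"
  have reps: "\<forall>x\<in>Q0 \<union> uminus ` Q0. \<exists>qs. set qs \<subseteq> Q \<and> sum_list qs = x"
  proof
    fix x assume "x \<in> Q0 \<union> uminus ` Q0"
    thus "\<exists>qs. set qs \<subseteq> Q \<and> sum_list qs = x"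
    proof
      assume "x \<in> Q0" thus ?thesis by (intro exI[of _ "[x]"]) (auto simp: Q_def)
    next
      assume "x \<in> uminus ` Q0"
      then obtain q where q: "q \<in> Q0" "x = - q" by auto
      obtain xs where "set xs \<subseteq> insert q Q1" "sum_list xs = - q"
        using walk[OF finQ1 \<delta>0 cov] by blast
      thus ?thesis using q by (intro exI[of _ xs]) (auto simp: Q_def)
    qed
  qed
  have sub: "set (xf i) \<subseteq> Q0 \<union> uminus ` Q0" "set (xg i) \<subseteq> Q0 \<union> uminus ` Q0" for i
    using AQ0 by (auto simp: A_def)
  have "\<exists>qs. set qs \<subseteq> Q \<and> sum_list qs = axis i 1" for i
    using sum_list_rep[OF reps sub(1)[of i]] xf[of i] by simp
  moreover have "\<exists>qs. set qs \<subseteq> Q \<and> sum_list qs = - axis i 1" for i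
    using sum_list_rep[OF reps sub(2)[of i]] xg[of i] by simp
  ultimately obtain L where "\<forall>z. \<exists>qs. set qs \<subseteq> Q \<and> sum_list qs = z \<and> length qs \<le> L * (\<Sum>i\<in>UNIV. nat \<bar>z$i\<bar>)"
    using span_bound[of Q] by blast
  hence "spanning Q" unfolding spanning_def by blast
  moreover have "finite Q" unfolding Q_def using finQ0 finQ1 by simp
  moreover have "Q \<subseteq> P" unfolding Q_def Q0_def using Q1P by blast
  ultimately show ?thesis by blast
qed

theorem lemma2p6:
  fixes P :: "(int ^ 'd) set"
  shows "((\<exists>v :: real ^ 'd. v \<noteq> 0 \<and> (\<forall>p\<in>P. v \<bullet> to_real_vec p \<ge> 0))
          \<or> (\<exists>L. sublattice L \<and> L \<noteq> UNIV \<and> P \<subseteq> L)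
          \<or> (\<exists>Q. finite Q \<and> Q \<subseteq> P \<and> spanning Q))
       \<and> (\<forall>Q. finite Q \<and> Q \<subseteq> P \<and> spanning Q \<longrightarrow>
            (\<forall>N. is_norm N \<longrightarrow>
              (\<exists>\<mu> \<nu> :: real. \<forall>z. \<exists>qs. set qs \<subseteq> Q \<and> sum_list qs = z
                 \<and> real (length qs) \<le> \<mu> * N (to_real_vec z)
                 \<and> (\<Sum>q\<leftarrow>qs. N (to_real_vec q)) \<le> \<nu> * N (to_real_vec z))))"
proof (intro conjI allI impI)
  show "(\<exists>v :: real ^ 'd. v \<noteq> 0 \<and> (\<forall>p\<in>P. v \<bullet> to_real_vec p \<ge> 0))
          \<or> (\<exists>L. sublattice L \<and> L \<noteq> UNIV \<and> P \<subseteq> L)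
          \<or> (\<exists>Q. finite Q \<and> Q \<subseteq> P \<and> spanning Q)"
    using part1[of P] by blast
next
  fix Q and N :: "real^'d \<Rightarrow> real" assume "finite Q \<and> Q \<subseteq> P \<and> spanning Q" "is_norm N"
  thus "\<exists>\<mu> \<nu> :: real. \<forall>z. \<exists>qs. set qs \<subseteq> Q \<and> sum_list qs = z
                 \<and> real (length qs) \<le> \<mu> * N (to_real_vec z)
                 \<and> (\<Sum>q\<leftarrow>qs. N (to_real_vec q)) \<le> \<nu> * N (to_real_vec z)"
    using part2[of Q N] by blast
qed

end
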